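(* Let $\mathcal{G}=(V,\mathcal{E})$ be a plurigraph with $V=[n]$. Then $$Y_{\mathcal{G}}=\sum_{A\subseteq\mathcal{E}}(-1)^{|A|}p_{\pi(A)},$$ where the sum is over all sub-multisets $A$ of $\mathcal{E}$ (the elements of $\mathcal{E}$ being regarded as distinct, so there are $2^{|\mathcal{E}|}$ terms).
   Context: Work over a field $\mathbb{K}$ of characteristic zero with noncommuting variables $y_1,y_2,\dots$, $\mathbb{P}=\{1,2,\dots\}$. A graph $(V,E)$ has $E$ a finite multiset of unordered pairs of (not necessarily distinct) vertices. A plurigraph is $\mathcal{G}=(V,\mathcal{E})$ with $\mathcal{E}$ a finite multiset of graphs $(V,E)$ on vertex set $V$ with $E\ne\emptyset$. A proper coloring is $f:V\to\mathbb{P}$ such that each $(V,E)\in\mathcal{E}$ has an edge $uv\in E$ with $f(u)\ne f(v)$; $Y_{\mathcal{G}}=\sum_f y_{f(1)}\cdots y_{f(n)}$ over proper colorings. For a set partition $\pi$ of $[n]$, $m_\pi=\sum y_{i_1}\cdots y_{i_n}$ over sequences $(i_1,\dots,i_n)\in\mathbb{P}^n$ with $i_j=i_k$ iff $j,k$ lie in the same block of $\pi$, and $p_\pi=\sum_{\sigma\ge\pi}m_\sigma$, the sum over set partitions $\sigma$ of $[n]$ coarser than or equal to $\pi$. For $A=\{(V,E_1),\dots,(V,E_k)\}\subseteq\mathcal{E}$, $\pi(A)$ is the partition of $V$ into connected components of the graph $(V,\bigcup_{i}E_i)$ (for $A=\emptyset$ this is the partition into singletons). *)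

theory Defs
  imports Main "HOL-Library.Multiset" "HOL-Library.Uprod" "HOL-Library.FuncSet"
    "HOL-Library.Disjoint_Sets"
begin

text \<open>A graph on [n] is a multiset of unordered pairs
  (loops allowed). A plurigraph is given by an indexed family (list) of graphs, so that
  equal graphs occurring several times count as distinct elements. Noncommutative series
  homogeneous of degree n are represented by their coefficient functions on words
  (lists of positive integers).\<close>

type_synonym graph = "nat uprod multiset"
type_synonym plurigraph = "graph list"

definition plurigraph_on :: "nat \<Rightarrow> plurigraph \<Rightarrow> bool" where
  "plurigraph_on n \<E> \<longleftrightarrow>
     (\<forall>E\<in>set \<E>. E \<noteq> {#} \<and> (\<forall>e\<in>#E. set_uprod e \<subseteq> {1..n}))"

definition proper :: "plurigraph \<Rightarrow> (nat \<Rightarrow> nat) \<Rightarrow> bool" where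
  "proper \<E> f \<longleftrightarrow> (\<forall>E\<in>set \<E>. \<exists>u v. Upair u v \<in># E \<and> f u \<noteq> f v)"

definition Y :: "nat \<Rightarrow> plurigraph \<Rightarrow> nat list \<Rightarrow> 'a::field_char_0" where
  "Y n \<E> w = of_nat (card {f \<in> {1..n} \<rightarrow>\<^sub>E {1..}. proper \<E> f \<and> map f [1..<n+1] = w})"

definition coarser :: "nat set set \<Rightarrow> nat set set \<Rightarrow> bool" where
  "coarser \<sigma> \<pi> \<longleftrightarrow> (\<forall>B\<in>\<pi>. \<exists>C\<in>\<sigma>. B \<subseteq> C)"

definition m :: "nat \<Rightarrow> nat set set \<Rightarrow> nat list \<Rightarrow> 'a::field_char_0" where
  "m n \<pi> w = (if length w = n \<and> (\<forall>j\<in>{1..n}. w!(j-1) \<ge> 1) \<and>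
        (\<forall>j\<in>{1..n}. \<forall>k\<in>{1..n}. w!(j-1) = w!(k-1) \<longleftrightarrow> (\<exists>B\<in>\<pi>. j \<in> B \<and> k \<in> B))
      then 1 else 0)"

definition p :: "nat \<Rightarrow> nat set set \<Rightarrow> nat list \<Rightarrow> 'a::field_char_0" where
  "p n \<pi> w = (\<Sum>\<sigma>\<in>{\<sigma>. partition_on {1..n} \<sigma> \<and> coarser \<sigma> \<pi>}. m n \<sigma> w)"

text \<open>Edges (as ordered pairs, both orientations) of the union of the graphs indexed by A.\<close>
definition union_edges :: "plurigraph \<Rightarrow> nat set \<Rightarrow> (nat \<times> nat) set" where
  "union_edges \<E> A = {(u, v). \<exists>i\<in>A. Upair u v \<in># \<E> ! i}"

definition comp_partition :: "nat \<Rightarrow> plurigraph \<Rightarrow> nat set \<Rightarrow> nat set set" where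
  "comp_partition n \<E> A = {1..n} // ((union_edges \<E> A)\<^sup>*)"

end

theory Submission
  imports Defs
begin

lemma ie_sum:
  assumes "finite I"
  shows "(\<Sum>A\<in>Pow I. (-1) ^ card A * (if \<forall>i\<in>A. P i then 1 else 0 :: 'a::comm_ring_1))
         = (if \<forall>i\<in>I. \<not> P i then 1 else 0)"
  using assms
proof (induction I rule: finite_induct)
  case empty
  then show ?case by simp
next
  case (insert x I)
  let ?f = "\<lambda>A. (-1) ^ card A * (if \<forall>i\<in>A. P i then 1 else 0 :: 'a)"
  have disj: "Pow I \<inter> insert x ` Pow I = {}" using insert.hyps by auto
  have inj: "inj_on (insert x) (Pow I)" using insert.hyps
    by (smt (verit, ccfv_SIG) PowD inj_onI insert_absorb insert_ident subset_iff)
  have "sum ?f (Pow (insert x I)) = sum ?f (Pow I) + sum ?f (insert x ` Pow I)"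
    unfolding Pow_insert by (rule sum.union_disjoint) (use insert.hyps disj in auto)
  also have "sum ?f (insert x ` Pow I) = sum (?f \<circ> insert x) (Pow I)"
    by (rule sum.reindex[OF inj])
  also have "\<dots> = sum (\<lambda>A. - ((if P x then 1 else 0) * ?f A)) (Pow I)"
  proof (rule sum.cong[OF refl])
    fix A assume A: "A \<in> Pow I"
    then have "finite A" "x \<notin> A" using insert.hyps finite_subset by auto
    then show "(?f \<circ> insert x) A = - ((if P x then 1 else 0) * ?f A)"
      by auto
  qed
  also have "\<dots> = - ((if P x then 1 else 0) * sum ?f (Pow I))"
    by (simp add: sum_negf sum_distrib_left)
  finally show ?case using insert.IH by auto
qed

definition rel_of :: "nat set set \<Rightarrow> (nat \<times> nat) set" where
  "rel_of \<sigma> = {(x, y). \<exists>B \<in> \<sigma>. x \<in> B \<and> y \<in> B}"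

lemma rel_of_quotient:
  assumes "equiv X r" shows "rel_of (X // r) = r"
  using assms unfolding rel_of_def equiv_def refl_on_def sym_def trans_def quotient_def
  by blast

lemma edge_in:
  assumes "plurigraph_on n \<E>" "i < length \<E>" "Upair u v \<in># \<E> ! i"
  shows "u \<in> {1..n}" "v \<in> {1..n}"
  using assms unfolding plurigraph_on_def by (metis insert_subset nth_mem set_uprod_simps)+

theorem theorem2p6:
  fixes n :: nat and \<E> :: plurigraph
  assumes "plurigraph_on n \<E>"
  shows "(Y n \<E> :: nat list \<Rightarrow> 'a::field_char_0) =
    (\<lambda>w. \<Sum>A\<in>Pow {..<length \<E>}. (-1) ^ card A * p n (comp_partition n \<E> A) w)"
proof
  fix w :: "nat list"
  define g where "g = (\<lambda>j. w ! (j - 1))"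
  define valid where "valid = (length w = n \<and> (\<forall>j\<in>{1..n}. g j \<ge> 1))"
  define mono where "mono = (\<lambda>i. \<forall>u v. Upair u v \<in># \<E> ! i \<longrightarrow> g u = g v)"
  define L where "L = length \<E>"
  have propiff: "proper \<E> f \<longleftrightarrow> (\<forall>i<L. \<not> mono i)" if agree: "\<forall>j\<in>{1..n}. f j = g j" for f
  proof -
    have "proper \<E> f \<longleftrightarrow> (\<forall>i<L. \<exists>u v. Upair u v \<in># \<E> ! i \<and> f u \<noteq> f v)"
      unfolding proper_def L_def by (metis in_set_conv_nth)
    also have "\<dots> \<longleftrightarrow> (\<forall>i<L. \<exists>u v. Upair u v \<in># \<E> ! i \<and> g u \<noteq> g v)"
      using agree edge_in[OF assms] unfolding L_def by metis
    finally show ?thesis unfolding mono_def by blast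
  qed
  have Yeq: "(Y n \<E> w :: 'a) = (if valid \<and> (\<forall>i<L. \<not> mono i) then 1 else 0)"
  proof -
    let ?S = "{f \<in> {1..n} \<rightarrow>\<^sub>E {1..}. proper \<E> f \<and> map f [1..<n+1] = w}"
    let ?h = "restrict g {1..n}"
    have mem: "f \<in> ?S \<Longrightarrow> f = ?h \<and> valid \<and> (\<forall>i<L. \<not> mono i)" for f
    proof -
      assume f: "f \<in> ?S"
      then have len: "length w = n" by auto
      have fg: "\<forall>j\<in>{1..n}. f j = g j"
      proof
        fix j assume j: "j \<in> {1..n}"
        have "map f [1..<n+1] ! (j - 1) = f j" proof -
          have jj: "j - 1 < n" "1 + (j - 1) = j" using j by auto
          show ?thesis using jj by (simp only: nth_map length_upt nth_upt)
        qed
        then show "f j = g j" using f g_def by auto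
      qed
      have "f = ?h" using f fg by (intro extensionalityI[of _ "{1..n}"]) (auto simp: PiE_iff simp del: upt_Suc)
      moreover have "valid" unfolding valid_def using len fg f by (auto simp: PiE_iff)
      moreover have "\<forall>i<L. \<not> mono i" using propiff[OF fg] f by auto
      ultimately show ?thesis by blast
    qed
    show ?thesis
    proof (cases "valid \<and> (\<forall>i<L. \<not> mono i)")
      case True
      have "?h \<in> ?S"
      proof -
        have "?h \<in> {1..n} \<rightarrow>\<^sub>E {1..}" using True unfolding valid_def by auto
        moreover have "proper \<E> ?h" using propiff[of ?h] True by auto
        moreover have "map ?h [1..<n+1] = w"
          using True unfolding valid_def g_def
          by (intro nth_equalityI) (auto simp del: upt_Suc)
        ultimately show ?thesis by blast
      qed
      then have SS: "?S = {?h}" using mem by blast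
      show ?thesis using True unfolding Y_def SS by simp
    next
      case False
      then have SS: "?S = {}" using mem by blast
      show ?thesis using False unfolding Y_def SS by simp
    qed
  qed
  have Peq: "(p n (comp_partition n \<E> A) w :: 'a) = (if valid \<and> (\<forall>i\<in>A. mono i) then 1 else 0)"
    if A: "A \<subseteq> {..<L}" for A
  proof (cases valid)
    case False
    then have "(m n \<sigma> w :: 'a) = 0" for \<sigma> unfolding m_def valid_def g_def by auto
    then show ?thesis unfolding p_def using False by simp
  next
    case True
    define K where "K = {(j, k). j \<in> {1..n} \<and> k \<in> {1..n} \<and> g j = g k}"
    define \<sigma>0 where "\<sigma>0 = {1..n} // K"
    define R where "R = (union_edges \<E> A)\<^sup>*"
    have eqK: "equiv {1..n} K" unfolding K_def equiv_def refl_on_def sym_def trans_def by auto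
    have part0: "partition_on {1..n} \<sigma>0" unfolding \<sigma>0_def by (rule partition_on_quotient[OF eqK])
    have mval: "(m n \<sigma> w :: 'a) = (if \<sigma> = \<sigma>0 then 1 else 0)" if \<sigma>: "partition_on {1..n} \<sigma>" for \<sigma>
    proof -
      have sub: "rel_of \<sigma> \<subseteq> {1..n} \<times> {1..n}"
        using partition_onD1[OF \<sigma>] unfolding rel_of_def by auto
      have rr: "(\<exists>B\<in>\<sigma>. j \<in> B \<and> k \<in> B) \<longleftrightarrow> (j, k) \<in> rel_of \<sigma>" for j k
        unfolding rel_of_def by simp
      have "(\<forall>j\<in>{1..n}. \<forall>k\<in>{1..n}. w!(j-1) = w!(k-1) \<longleftrightarrow> (\<exists>B\<in>\<sigma>. j \<in> B \<and> k \<in> B))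
            \<longleftrightarrow> (\<forall>j\<in>{1..n}. \<forall>k\<in>{1..n}. g j = g k \<longleftrightarrow> (j, k) \<in> rel_of \<sigma>)"
        unfolding rr g_def by (rule refl)
      also have "\<dots> \<longleftrightarrow> rel_of \<sigma> = K"
      proof
        assume H: "\<forall>j\<in>{1..n}. \<forall>k\<in>{1..n}. g j = g k \<longleftrightarrow> (j, k) \<in> rel_of \<sigma>"
        show "rel_of \<sigma> = K"
        proof (rule set_eqI)
          fix x show "x \<in> rel_of \<sigma> \<longleftrightarrow> x \<in> K"
            using sub H unfolding K_def by (cases x) blast
        qed
      next
        assume "rel_of \<sigma> = K" then show "\<forall>j\<in>{1..n}. \<forall>k\<in>{1..n}. g j = g k \<longleftrightarrow> (j, k) \<in> rel_of \<sigma>"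
          unfolding K_def by blast
      qed
      also have "\<dots> \<longleftrightarrow> \<sigma> = \<sigma>0"
      proof
        assume "rel_of \<sigma> = K"
        then show "\<sigma> = \<sigma>0" using partition_on_eq_quotient[OF \<sigma>]
          unfolding \<sigma>0_def rel_of_def by simp
      next
        assume "\<sigma> = \<sigma>0"
        then show "rel_of \<sigma> = K" using rel_of_quotient[OF eqK] \<sigma>0_def by simp
      qed
      finally have cond: "(\<forall>j\<in>{1..n}. \<forall>k\<in>{1..n}. w!(j-1) = w!(k-1) \<longleftrightarrow> (\<exists>B\<in>\<sigma>. j \<in> B \<and> k \<in> B)) \<longleftrightarrow> \<sigma> = \<sigma>0" .
      have v1: "length w = n" and v2: "(\<forall>j\<in>{1..n}. w!(j-1) \<ge> 1)" using True unfolding valid_def g_def by auto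
      show ?thesis unfolding m_def using v2 by (simp only: v1 cond simp_thms) simp
    qed
    let ?S = "{\<sigma>. partition_on {1..n} \<sigma> \<and> coarser \<sigma> (comp_partition n \<E> A)}"
    have fin: "finite ?S"
      by (rule finite_subset[OF _ finitely_many_partition_on[of "{1..n}"]]) auto
    have "(p n (comp_partition n \<E> A) w :: 'a) = (\<Sum>\<sigma>\<in>?S. if \<sigma> = \<sigma>0 then 1 else 0)"
      unfolding p_def by (rule sum.cong) (auto simp: mval)
    also have "\<dots> = (if \<sigma>0 \<in> ?S then 1 else 0)"
      using sum.delta[OF fin, of \<sigma>0 "\<lambda>_. 1::'a"] by simp
    also have "(\<sigma>0 \<in> ?S) \<longleftrightarrow> (\<forall>i\<in>A. mono i)"
    proof
      assume "\<sigma>0 \<in> ?S"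
      then have co: "coarser \<sigma>0 ({1..n} // R)" unfolding comp_partition_def R_def by simp
      show "\<forall>i\<in>A. mono i" unfolding mono_def
      proof (intro ballI allI impI)
        fix i u v assume i: "i \<in> A" and e: "Upair u v \<in># \<E> ! i"
        have iL: "i < length \<E>" using i A L_def by auto
        have uv: "u \<in> {1..n}" "v \<in> {1..n}" using edge_in[OF assms iL e] by auto
        have "(u, v) \<in> R" unfolding R_def union_edges_def using i e by auto
        then have "u \<in> R `` {u}" "v \<in> R `` {u}" "R `` {u} \<in> {1..n} // R"
          using uv unfolding R_def by (auto intro: quotientI)
        then obtain C where "C \<in> \<sigma>0" "u \<in> C" "v \<in> C" using co unfolding coarser_def by blast
        then show "g u = g v" unfolding \<sigma>0_def K_def quotient_def by auto
      qed
    next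
      assume mo: "\<forall>i\<in>A. mono i"
      have path: "(x, y) \<in> R \<Longrightarrow> x \<in> {1..n} \<Longrightarrow> y \<in> {1..n} \<and> g x = g y" for x y
        unfolding R_def
      proof (induction rule: rtrancl_induct)
        case base then show ?case by simp
      next
        case (step y z)
        then obtain i where i: "i \<in> A" "Upair y z \<in># \<E> ! i" unfolding union_edges_def by auto
        have iL: "i < length \<E>" using i A L_def by auto
        show ?case using step edge_in[OF assms iL i(2)] mo i unfolding mono_def by metis
      qed
      have "coarser \<sigma>0 ({1..n} // R)" unfolding coarser_def
      proof
        fix B assume "B \<in> {1..n} // R"
        then obtain x where x: "x \<in> {1..n}" "B = R `` {x}" by (auto simp: quotient_def)
        have "K `` {x} \<in> \<sigma>0" unfolding \<sigma>0_def using x by (auto intro: quotientI)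
        moreover have "B \<subseteq> K `` {x}" using x path unfolding K_def by auto
        ultimately show "\<exists>C\<in>\<sigma>0. B \<subseteq> C" by blast
      qed
      then show "\<sigma>0 \<in> ?S" using part0 unfolding comp_partition_def R_def by simp
    qed
    finally show ?thesis using True by simp
  qed
  have "(\<Sum>A\<in>Pow {..<L}. (-1) ^ card A * (p n (comp_partition n \<E> A) w :: 'a))
      = (\<Sum>A\<in>Pow {..<L}. (-1) ^ card A * (if valid \<and> (\<forall>i\<in>A. mono i) then 1 else 0))"
    by (rule sum.cong) (auto simp: Peq)
  also have "\<dots> = (if valid \<and> (\<forall>i<L. \<not> mono i) then 1 else 0)"
  proof (cases valid)
    case True
    have e: "(\<forall>i\<in>{..<L}. \<not> mono i) \<longleftrightarrow> (\<forall>i<L. \<not> mono i)" by auto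
    have "(\<Sum>A\<in>Pow {..<L}. (-1) ^ card A * (if \<forall>i\<in>A. mono i then 1 else 0 :: 'a))
         = (if \<forall>i\<in>{..<L}. \<not> mono i then 1 else 0)" by (rule ie_sum) simp
    then show ?thesis using True unfolding e by simp
  next
    case False
    then show ?thesis by simp
  qed
  finally show "(Y n \<E> w :: 'a) = (\<Sum>A\<in>Pow {..<length \<E>}. (-1) ^ card A * p n (comp_partition n \<E> A) w)"
    using Yeq L_def by simp
qed

end
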